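(* In the setting described in the context, let $D\subseteq A\subseteq D\cup T$. Let $[e_1,e_2]\in T$ and set $A'=A\cup\{[e_1,e_2]\}$. Let $L_1,L_2\in\Pi_A$ be the circuits with $e_1\in L_1$ and $e_2\in L_2$. Then $$\Pi_{A'}=\Pi'\cup\big(\Pi_A\setminus\{L_1,L_2,L^*_{1},L^*_{2}\}\big),$$ where the duals $L_1^*,L_2^*$ are taken with respect to $A$, and $\Pi'$ is given by the following two cases. (i) If $L_1=L_2$, or $L_1=L_1^*$, or $L_2=L_2^*$, then $\Pi'=\{L_1\cup L_1^*\cup L_2\cup L_2^*\}$, and this single circuit is shorted with respect to $A'$. (ii) Otherwise, $\Pi'=\{L_1\cup L_2^*,\ L_1^*\cup L_2\}$; these two circuits are duals of each other with respect to $A'$, and neither is shorted. In addition, if $L_2=L_1^*$ then $\Pi_{A'}=\Pi_A$.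
   Context: Let $n\ge4$, $V=\{0,\dots,n-1\}$, and let $E=\{(u,v)\in V\times V:u\ne v\}$ be the set of arcs, written $uv$. Let $\chi_e\in\mathbb R^E$ be unit vectors and $\chi_F=\sum_{e\in F}\chi_e$. Let $\delta^\pm(w)$ be the arcs leaving/entering $w$, let $\delta^+(S)=\{uv:u\in S,v\notin S\}$, let $\mathcal S=\{S\subset V:2\le|S|\le n-2\}$, and let $x(F)=\sum_{e\in F}x_e$. The polytope is $P^n=\{x\in\mathbb R^E: x(\delta^+(w))=x(\delta^-(w))=1\ \forall w,\ x(\delta^+(S))\ge1\ \forall S\in\mathcal S,\ x\ge0\}$. Fix $\bar x\in P^n\cap\{0,\tfrac12\}^E$ and let $E_{\bar x}=\{e:\bar x_e=\tfrac12\}$. For $a\in\{0,1\}^E$ let $\mathrm{pr}(a)=\sum_{e\in E_{\bar x}}a_e\chi_e$. Let $\mathcal S_{\bar x}=\{S\in\mathcal S:\bar x(\delta^+(S))=1\}$. Define the sets $$D=\{\mathrm{pr}(\chi_{\delta^+(u)}),\mathrm{pr}(\chi_{\delta^-(u)}):u\in V\}, \qquad T=\{\mathrm{pr}(\chi_{\delta^+(S)}):S\in\mathcal S_{\bar x}\}.$$ Every vector of $D\cup T$ equals $\chi_{e_1}+\chi_{e_2}$ for two distinct arcs $e_1,e_2\in E_{\bar x}$; it is written $[e_1,e_2]=[e_2,e_1]$. Let $A$ be a set with $D\subseteq A\subseteq D\cup T$. On $E_{\bar x}$ define the relation $e\sim_A e'$ iff there is $\bar e\in E_{\bar x}$ with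 $[e,\bar e]\in A$ and $[\bar e,e']\in A$. Let $\equiv_A$ be its transitive closure; this is an equivalence relation. The equivalence classes are called circuits, and they form the circuit partition $\Pi_A$ of $E_{\bar x}$. For $L\in\Pi_A$, the set $\{\bar e\in E_{\bar x}:\exists e\in L,\ [e,\bar e]\in A\}$ is nonempty and contained in a unique circuit, denoted $L^*_A$ and called the dual of $L$. The pair $\{L,L^*_A\}$ is a circuit pair. $L$ is called shorted if $L^*_A=L$. Define $\langle L,L^*\rangle_A=\{[e,\bar e]\in A: e\in L,\ \bar e\in L^*_A\}$. *)

theory Defs
  imports Main "HOL-Library.Library"
begin

type_synonym arc = "nat \<times> nat"

definition arcs :: "nat \<Rightarrow> arc set" where
  "arcs n = {(u,v). u < n \<and> v < n \<and> u \<noteq> v}"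

definition delta_out :: "nat \<Rightarrow> nat \<Rightarrow> arc set" where
  "delta_out n w = {(u,v) \<in> arcs n. u = w}"

definition delta_in :: "nat \<Rightarrow> nat \<Rightarrow> arc set" where
  "delta_in n w = {(u,v) \<in> arcs n. v = w}"

definition delta_cut :: "nat \<Rightarrow> nat set \<Rightarrow> arc set" where
  "delta_cut n S = {(u,v) \<in> arcs n. u \<in> S \<and> v \<notin> S}"

definition subtour_sets :: "nat \<Rightarrow> nat set set" where
  "subtour_sets n = {S. S \<subseteq> {..<n} \<and> 2 \<le> card S \<and> card S \<le> n - 2}"

definition in_P :: "nat \<Rightarrow> (arc \<Rightarrow> real) \<Rightarrow> bool" where
  "in_P n x \<longleftrightarrow>
     (\<forall>w<n. sum x (delta_out n w) = 1 \<and> sum x (delta_in n w) = 1) \<and>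
     (\<forall>S\<in>subtour_sets n. sum x (delta_cut n S) \<ge> 1) \<and>
     (\<forall>e\<in>arcs n. x e \<ge> 0)"

definition half_integral :: "nat \<Rightarrow> (arc \<Rightarrow> real) \<Rightarrow> bool" where
  "half_integral n x \<longleftrightarrow> (\<forall>e\<in>arcs n. x e = 0 \<or> x e = 1/2)"

definition Ex :: "nat \<Rightarrow> (arc \<Rightarrow> real) \<Rightarrow> arc set" where
  "Ex n x = {e \<in> arcs n. x e = 1/2}"

definition tight_sets :: "nat \<Rightarrow> (arc \<Rightarrow> real) \<Rightarrow> nat set set" where
  "tight_sets n x = {S \<in> subtour_sets n. sum x (delta_cut n S) = 1}"

text \<open>0/1 vectors supported on E_x are represented by their supports (sets of arcs);
  pr(chi_F) corresponds to F \<inter> E_x.\<close>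

definition Dset :: "nat \<Rightarrow> (arc \<Rightarrow> real) \<Rightarrow> arc set set" where
  "Dset n x = (\<lambda>w. delta_out n w \<inter> Ex n x) ` {..<n} \<union> (\<lambda>w. delta_in n w \<inter> Ex n x) ` {..<n}"

definition Tset :: "nat \<Rightarrow> (arc \<Rightarrow> real) \<Rightarrow> arc set set" where
  "Tset n x = (\<lambda>S. delta_cut n S \<inter> Ex n x) ` tight_sets n x"

text \<open>[e,f] \<in> A, where [e,f] = chi_e + chi_f with e, f distinct.\<close>
definition pair_in :: "arc set set \<Rightarrow> arc \<Rightarrow> arc \<Rightarrow> bool" where
  "pair_in A e f \<longleftrightarrow> e \<noteq> f \<and> {e, f} \<in> A"

definition sim_rel :: "nat \<Rightarrow> (arc \<Rightarrow> real) \<Rightarrow> arc set set \<Rightarrow> arc rel" where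
  "sim_rel n x A = {(e, e'). e \<in> Ex n x \<and> e' \<in> Ex n x \<and>
      (\<exists>f\<in>Ex n x. pair_in A e f \<and> pair_in A f e')}"

definition circuits :: "nat \<Rightarrow> (arc \<Rightarrow> real) \<Rightarrow> arc set set \<Rightarrow> arc set set" where
  "circuits n x A = Ex n x // ((sim_rel n x A)\<^sup>+)"

definition dual :: "nat \<Rightarrow> (arc \<Rightarrow> real) \<Rightarrow> arc set set \<Rightarrow> arc set \<Rightarrow> arc set" where
  "dual n x A L = (THE L'. L' \<in> circuits n x A \<and>
      {f \<in> Ex n x. \<exists>e\<in>L. pair_in A e f} \<subseteq> L')"

definition shorted :: "nat \<Rightarrow> (arc \<Rightarrow> real) \<Rightarrow> arc set set \<Rightarrow> arc set \<Rightarrow> bool" where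
  "shorted n x A L \<longleftrightarrow> dual n x A L = L"

end

theory Submission
  imports Defs
begin


definition Hyp :: "nat \<Rightarrow> (arc \<Rightarrow> real) \<Rightarrow> arc set set \<Rightarrow> bool" where
  "Hyp n x A \<longleftrightarrow> (\<forall>X\<in>A. X \<subseteq> Ex n x) \<and> (\<forall>e\<in>Ex n x. \<exists>f. pair_in A e f)"

abbreviation Eqr where "Eqr n x A \<equiv> (sim_rel n x A)\<^sup>+"

lemma pair_sym: "pair_in A e f \<Longrightarrow> pair_in A f e"
  unfolding pair_in_def by (auto simp: insert_commute)

lemma pair_V: "Hyp n x A \<Longrightarrow> pair_in A e f \<Longrightarrow> e \<in> Ex n x \<and> f \<in> Ex n x"
  unfolding Hyp_def pair_in_def by blast

lemma sim_refl: "Hyp n x A \<Longrightarrow> e \<in> Ex n x \<Longrightarrow> (e,e) \<in> sim_rel n x A"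
proof -
  assume H: "Hyp n x A" and e: "e \<in> Ex n x"
  then obtain f where f: "pair_in A e f" unfolding Hyp_def by blast
  have "f \<in> Ex n x" using pair_V[OF H f] by blast
  then show ?thesis unfolding sim_rel_def using e f pair_sym[OF f] by blast
qed

lemma sim_sym: "(a,b) \<in> sim_rel n x A \<Longrightarrow> (b,a) \<in> sim_rel n x A"
  unfolding sim_rel_def using pair_sym by blast

lemma sim_sub: "sim_rel n x A \<subseteq> Ex n x \<times> Ex n x"
  unfolding sim_rel_def by blast

lemma Eq_V: "(a,b) \<in> Eqr n x A \<Longrightarrow> a \<in> Ex n x \<and> b \<in> Ex n x"
  using trancl_subset_Sigma[OF sim_sub] by blast

lemma Eq_sym: "(a,b) \<in> Eqr n x A \<Longrightarrow> (b,a) \<in> Eqr n x A"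
proof (induction rule: trancl_induct)
  case (base y) then show ?case using sim_sym by blast
next
  case (step y z) then show ?case using sim_sym
    by (meson r_into_trancl' trancl_trans)
qed

lemma Eq_refl: "Hyp n x A \<Longrightarrow> e \<in> Ex n x \<Longrightarrow> (e,e) \<in> Eqr n x A"
  using sim_refl by blast

lemma Eq_trans: "(a,b) \<in> Eqr n x A \<Longrightarrow> (b,c) \<in> Eqr n x A \<Longrightarrow> (a,c) \<in> Eqr n x A"
  by (rule trancl_trans)

lemma cls_self: "Hyp n x A \<Longrightarrow> e \<in> Ex n x \<Longrightarrow> e \<in> Eqr n x A `` {e}"
  using Eq_refl by blast

lemma cls_meet: "c \<in> Eqr n x A `` {a} \<Longrightarrow> c \<in> Eqr n x A `` {b} \<Longrightarrow> Eqr n x A `` {a} = Eqr n x A `` {b}"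
proof -
  assume "c \<in> Eqr n x A `` {a}" "c \<in> Eqr n x A `` {b}"
  then have ac: "(a,c) \<in> Eqr n x A" and bc: "(b,c) \<in> Eqr n x A" by auto
  have ab: "(a,b) \<in> Eqr n x A" using Eq_trans[OF ac Eq_sym[OF bc]] .
  show ?thesis using Eq_trans[OF ab] Eq_trans[OF Eq_sym[OF ab]] by blast
qed

lemma circuits_iff: "L \<in> circuits n x A \<longleftrightarrow> (\<exists>e\<in>Ex n x. L = Eqr n x A `` {e})"
  unfolding circuits_def quotient_def by blast

lemma sim_step:
  assumes H: "Hyp n x A" and ee: "(e,e') \<in> sim_rel n x A" and ef: "pair_in A e f" and ef': "pair_in A e' f'"
  shows "(f,f') \<in> Eqr n x A"
proof -
  obtain g where g: "g \<in> Ex n x" "pair_in A e g" "pair_in A g e'" using ee unfolding sim_rel_def by blast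
  have V: "e \<in> Ex n x" "f \<in> Ex n x" "e' \<in> Ex n x" "f' \<in> Ex n x" using pair_V[OF H ef] pair_V[OF H ef'] by auto
  have 1: "(f,g) \<in> sim_rel n x A" unfolding sim_rel_def using V g pair_sym[OF ef] by blast
  have 2: "(g,f') \<in> sim_rel n x A" unfolding sim_rel_def using V g ef' by blast
  show ?thesis using 1 2 by auto
qed

lemma key_aux:
  assumes H: "Hyp n x A" and ee: "(e,e') \<in> Eqr n x A"
  shows "\<forall>f f'. pair_in A e f \<longrightarrow> pair_in A e' f' \<longrightarrow> (f,f') \<in> Eqr n x A"
  using ee
proof (induction rule: trancl_induct)
  case (base y) then show ?case using sim_step[OF H] by blast
next
  case (step y z)
  show ?case
  proof (intro allI impI)
    fix f f' assume ef: "pair_in A e f" and zf: "pair_in A z f'"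
    have "y \<in> Ex n x" using step(2) sim_sub by blast
    then obtain h where h: "pair_in A y h" using H unfolding Hyp_def by blast
    have "(f,h) \<in> Eqr n x A" using step(3) ef h by blast
    moreover have "(h,f') \<in> Eqr n x A" using sim_step[OF H step(2) h zf] .
    ultimately show "(f,f') \<in> Eqr n x A" by (rule trancl_trans)
  qed
qed

lemma key: "Hyp n x A \<Longrightarrow> (e,e') \<in> Eqr n x A \<Longrightarrow> pair_in A e f \<Longrightarrow> pair_in A e' f' \<Longrightarrow> (f,f') \<in> Eqr n x A"
  using key_aux by blast

lemma key0: "Hyp n x A \<Longrightarrow> pair_in A e f \<Longrightarrow> pair_in A e f' \<Longrightarrow> (f,f') \<in> Eqr n x A"
  using key Eq_refl pair_V by metis

lemma dual_cls:
  assumes H: "Hyp n x A" and ef: "pair_in A e f"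
  shows "dual n x A (Eqr n x A `` {e}) = Eqr n x A `` {f}"
  unfolding dual_def
proof (rule the_equality)
  have V: "e \<in> Ex n x" "f \<in> Ex n x" using pair_V[OF H ef] by auto
  have "{g \<in> Ex n x. \<exists>e'\<in>Eqr n x A `` {e}. pair_in A e' g} \<subseteq> Eqr n x A `` {f}"
    using key[OF H _ ef] by blast
  then show "Eqr n x A `` {f} \<in> circuits n x A \<and>
    {g \<in> Ex n x. \<exists>e'\<in>Eqr n x A `` {e}. pair_in A e' g} \<subseteq> Eqr n x A `` {f}"
    using V circuits_iff by blast
next
  fix L' assume a: "L' \<in> circuits n x A \<and> {g \<in> Ex n x. \<exists>e'\<in>Eqr n x A `` {e}. pair_in A e' g} \<subseteq> L'"
  have V: "e \<in> Ex n x" "f \<in> Ex n x" using pair_V[OF H ef] by auto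
  have "f \<in> L'" using a V ef cls_self[OF H V(1)] by blast
  moreover obtain c where "L' = Eqr n x A `` {c}" using a circuits_iff by blast
  ultimately show "L' = Eqr n x A `` {f}" using cls_meet cls_self[OF H V(2)] by metis
qed

lemma finite_arcs: "finite (arcs n)"
  by (rule finite_subset[of _ "{..<n} \<times> {..<n}"]) (auto simp: arcs_def)

lemma half_card:
  assumes "finite F" "\<forall>e\<in>F. x e = 0 \<or> x e = (1/2::real)" "sum x F = 1"
  shows "card (F \<inter> {e. x e = 1/2}) = 2"
proof -
  have "sum x F = sum x (F \<inter> {e. x e = 1/2}) + sum x (F - {e. x e = 1/2})"
    using assms(1) by (metis sum.Int_Diff)
  also have "sum x (F - {e. x e = 1/2}) = 0" using assms(2) by (intro sum.neutral) auto
  also have "sum x (F \<inter> {e. x e = 1/2}) = sum (\<lambda>_. 1/2) (F \<inter> {e. x e = 1/2})"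
    by (rule sum.cong) auto
  finally show ?thesis using assms(3) by simp
qed

lemma Hyp_A:
  assumes P: "in_P n x" and hi: "half_integral n x"
    and D: "Dset n x \<subseteq> A" and AT: "A \<subseteq> Dset n x \<union> Tset n x"
  shows "Hyp n x A"
  unfolding Hyp_def
proof (intro conjI ballI)
  fix X assume "X \<in> A" then show "X \<subseteq> Ex n x" using AT unfolding Dset_def Tset_def by blast
next
  fix e assume e: "e \<in> Ex n x"
  obtain u v where uv: "e = (u,v)" by fastforce
  have u: "u < n" using e uv unfolding Ex_def arcs_def by auto
  have sub: "delta_out n u \<subseteq> arcs n" unfolding delta_out_def by auto
  have "card (delta_out n u \<inter> {e. x e = 1/2}) = 2"
    apply (rule half_card)
    using finite_subset[OF sub finite_arcs] hi sub P u unfolding half_integral_def in_P_def by auto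
  moreover have "delta_out n u \<inter> {e. x e = 1/2} = delta_out n u \<inter> Ex n x"
    using sub unfolding Ex_def by auto
  ultimately have c2: "card (delta_out n u \<inter> Ex n x) = 2" by simp
  have eIn: "e \<in> delta_out n u \<inter> Ex n x" using e uv unfolding Ex_def delta_out_def by auto
  from c2 obtain a b where ab: "delta_out n u \<inter> Ex n x = {a,b}" "a \<noteq> b" by (auto simp: card_2_iff)
  have "delta_out n u \<inter> Ex n x \<in> A" using D u unfolding Dset_def by blast
  then show "\<exists>f. pair_in A e f" using ab eIn unfolding pair_in_def
    by (metis doubleton_eq_iff insertE singletonD)
qed



theorem mainTheorem6:
  fixes n :: nat and x :: "arc \<Rightarrow> real" and A :: "arc set set"
    and e1 e2 :: arc and L1 L2 :: "arc set"
  assumes "n \<ge> 4"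
    and "in_P n x" and "half_integral n x"
    and "Dset n x \<subseteq> A" and "A \<subseteq> Dset n x \<union> Tset n x"
    and "e1 \<noteq> e2" and "{e1, e2} \<in> Tset n x"
    and "L1 \<in> circuits n x A" and "e1 \<in> L1"
    and "L2 \<in> circuits n x A" and "e2 \<in> L2"
  shows
   "let A' = insert {e1, e2} A;
        L1s = dual n x A L1; L2s = dual n x A L2;
        rest = circuits n x A - {L1, L2, L1s, L2s}
    in ((L1 = L2 \<or> L1 = L1s \<or> L2 = L2s) \<longrightarrow>
          circuits n x A' = {L1 \<union> L1s \<union> L2 \<union> L2s} \<union> rest \<and>
          shorted n x A' (L1 \<union> L1s \<union> L2 \<union> L2s))
     \<and> (\<not> (L1 = L2 \<or> L1 = L1s \<or> L2 = L2s) \<longrightarrow>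
          circuits n x A' = {L1 \<union> L2s, L1s \<union> L2} \<union> rest \<and>
          dual n x A' (L1 \<union> L2s) = L1s \<union> L2 \<and>
          dual n x A' (L1s \<union> L2) = L1 \<union> L2s \<and>
          \<not> shorted n x A' (L1 \<union> L2s) \<and> \<not> shorted n x A' (L1s \<union> L2))
     \<and> (L2 = L1s \<longrightarrow> circuits n x A' = circuits n x A)"
proof -
  define V where "V = Ex n x"
  define A' where "A' = insert {e1, e2} A"
  define E where "E = Eqr n x A"
  define E' where "E' = Eqr n x A'"
  have HA: "Hyp n x A" using Hyp_A assms(2-5) by blast
  have eV: "e1 \<in> V" "e2 \<in> V" using assms(7) unfolding Tset_def V_def by auto
  have HA': "Hyp n x A'" using HA eV unfolding Hyp_def A'_def V_def pair_in_def by blast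
  have pA': "\<And>a b. pair_in A' a b \<longleftrightarrow> pair_in A a b \<or> (a = e1 \<and> b = e2) \<or> (a = e2 \<and> b = e1)"
    using assms(6) unfolding A'_def pair_in_def by (auto simp: doubleton_eq_iff)
  have L1: "L1 = E `` {e1}"
    using assms(8,9) circuits_iff cls_self[OF HA] eV cls_meet unfolding E_def V_def by metis
  have L2: "L2 = E `` {e2}"
    using assms(10,11) circuits_iff cls_self[OF HA] eV cls_meet unfolding E_def V_def by metis
  obtain f1 where f1: "pair_in A e1 f1" using HA eV unfolding Hyp_def V_def by blast
  obtain f2 where f2: "pair_in A e2 f2" using HA eV unfolding Hyp_def V_def by blast
  have fV: "f1 \<in> V" "f2 \<in> V" using pair_V[OF HA f1] pair_V[OF HA f2] unfolding V_def by auto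
  have L1s: "dual n x A L1 = E `` {f1}" using dual_cls[OF HA f1] L1 E_def by simp
  have L2s: "dual n x A L2 = E `` {f2}" using dual_cls[OF HA f2] L2 E_def by simp
  have d1: "dual n x A (E `` {f1}) = E `` {e1}" using dual_cls[OF HA pair_sym[OF f1]] E_def by simp
  have d2: "dual n x A (E `` {f2}) = E `` {e2}" using dual_cls[OF HA pair_sym[OF f2]] E_def by simp
  have Etr: "\<And>a b c. (a,b) \<in> E \<Longrightarrow> (b,c) \<in> E \<Longrightarrow> (a,c) \<in> E" unfolding E_def by (rule Eq_trans)
  have Esym: "\<And>a b. (a,b) \<in> E \<Longrightarrow> (b,a) \<in> E" unfolding E_def by (rule Eq_sym)
  have ErV: "\<And>a. a \<in> V \<Longrightarrow> (a,a) \<in> E" unfolding E_def V_def using Eq_refl[OF HA] by blast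
  have EV: "\<And>a b. (a,b) \<in> E \<Longrightarrow> a \<in> V \<and> b \<in> V" unfolding E_def V_def by (rule Eq_V)
  have Ktr: "\<And>c. E `` {c} \<subseteq> V" using EV by blast
  have Kmeet: "\<And>a b c. c \<in> E `` {a} \<Longrightarrow> c \<in> E `` {b} \<Longrightarrow> E `` {a} = E `` {b}"
    unfolding E_def by (rule cls_meet)
  have Kself: "\<And>a. a \<in> V \<Longrightarrow> a \<in> E `` {a}" using ErV by blast
  have circ: "\<And>L. L \<in> circuits n x A \<longleftrightarrow> (\<exists>e\<in>V. L = E `` {e})"
    unfolding E_def V_def by (rule circuits_iff)
  define M1 where "M1 = E `` {e1} \<union> E `` {f2}"
  define M2 where "M2 = E `` {f1} \<union> E `` {e2}"
  have M1cl: "\<And>a b. (a,b) \<in> E \<Longrightarrow> a \<in> M1 \<longleftrightarrow> b \<in> M1"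
    unfolding M1_def using Etr Esym by blast
  have M2cl: "\<And>a b. (a,b) \<in> E \<Longrightarrow> a \<in> M2 \<longleftrightarrow> b \<in> M2"
    unfolding M2_def using Etr Esym by blast
  have MV: "M1 \<subseteq> V" "M2 \<subseteq> V" unfolding M1_def M2_def using Ktr by auto
  define S where "S = {(a,b). a \<in> V \<and> b \<in> V \<and> ((a,b) \<in> E \<or> (a \<in> M1 \<and> b \<in> M1) \<or> (a \<in> M2 \<and> b \<in> M2)
     \<or> (M1 \<inter> M2 \<noteq> {} \<and> a \<in> M1 \<union> M2 \<and> b \<in> M1 \<union> M2))}"
  have transS: "trans S"
  proof (rule transI)
    fix a b c assume ab: "(a,b) \<in> S" and bc: "(b,c) \<in> S"
    have ab': "a \<in> V" "b \<in> V" "(a,b) \<in> E \<or> (a \<in> M1 \<and> b \<in> M1) \<or> (a \<in> M2 \<and> b \<in> M2)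
     \<or> (M1 \<inter> M2 \<noteq> {} \<and> a \<in> M1 \<union> M2 \<and> b \<in> M1 \<union> M2)" using ab unfolding S_def by auto
    have bc': "c \<in> V" "(b,c) \<in> E \<or> (b \<in> M1 \<and> c \<in> M1) \<or> (b \<in> M2 \<and> c \<in> M2)
     \<or> (M1 \<inter> M2 \<noteq> {} \<and> b \<in> M1 \<union> M2 \<and> c \<in> M1 \<union> M2)" using bc unfolding S_def by auto
    have "(a,c) \<in> E \<or> (a \<in> M1 \<and> c \<in> M1) \<or> (a \<in> M2 \<and> c \<in> M2)
     \<or> (M1 \<inter> M2 \<noteq> {} \<and> a \<in> M1 \<union> M2 \<and> c \<in> M1 \<union> M2)"
      using ab'(3) bc'(2) M1cl[of a b] M2cl[of a b] M1cl[of b c] M2cl[of b c] Etr[of a b c] by blast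
    then show "(a,c) \<in> S" using ab'(1) bc'(1) unfolding S_def by blast
  qed
  have n1: "\<And>a. pair_in A e1 a \<or> pair_in A a e1 \<Longrightarrow> a \<in> E `` {f1}"
    using key0[OF HA f1] pair_sym unfolding E_def by blast
  have n2: "\<And>a. pair_in A e2 a \<or> pair_in A a e2 \<Longrightarrow> a \<in> E `` {f2}"
    using key0[OF HA f2] pair_sym unfolding E_def by blast
  have RS: "sim_rel n x A' \<subseteq> S"
  proof
    fix p assume p: "p \<in> sim_rel n x A'"
    obtain a b where pab: "p = (a,b)" by (cases p) blast
    obtain g where g: "a \<in> V" "b \<in> V" "g \<in> V" "pair_in A' a g" "pair_in A' g b"
      using p pab unfolding sim_rel_def V_def by blast
    have old: "pair_in A a g \<Longrightarrow> pair_in A g b \<Longrightarrow> (a,b) \<in> E"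
      using g unfolding E_def V_def sim_rel_def by blast
    have s1: "e1 \<in> E `` {e1}" "e2 \<in> E `` {e2}" using Kself eV by auto
    have SI: "\<And>a b. a \<in> V \<Longrightarrow> b \<in> V \<Longrightarrow> (a,b) \<in> E \<or> (a \<in> M1 \<and> b \<in> M1) \<or> (a \<in> M2 \<and> b \<in> M2) \<Longrightarrow> (a,b) \<in> S"
      unfolding S_def by blast
    have sub: "E `` {f1} \<subseteq> M2" "E `` {f2} \<subseteq> M1" "e1 \<in> M1" "e2 \<in> M2"
      unfolding M1_def M2_def using s1 by auto
    show "p \<in> S" using g(4,5) unfolding pA' pab
      apply (elim disjE conjE)
      apply (rule SI[OF g(1,2)], use old n1 n2 sub ErV g(1) assms(6) in blast)+
      done
  qed
  have E'S: "E' \<subseteq> S" unfolding E'_def using trancl_mono[OF _ RS] transS trancl_id by blast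
  have sim_mono: "sim_rel n x A \<subseteq> sim_rel n x A'"
    unfolding sim_rel_def pA' by blast
  have EE': "E \<subseteq> E'" unfolding E_def E'_def using trancl_mono sim_mono by blast
  have E'tr: "\<And>a b c. (a,b) \<in> E' \<Longrightarrow> (b,c) \<in> E' \<Longrightarrow> (a,c) \<in> E'" unfolding E'_def by (rule Eq_trans)
  have E'sym: "\<And>a b. (a,b) \<in> E' \<Longrightarrow> (b,a) \<in> E'" unfolding E'_def by (rule Eq_sym)
  have c1: "(e1,f2) \<in> E'" unfolding E'_def sim_rel_def using eV fV pA' f2 unfolding V_def by blast
  have c2: "(e2,f1) \<in> E'" unfolding E'_def sim_rel_def using eV fV pA' f1 unfolding V_def by blast
  have m1: "\<And>a. a \<in> M1 \<Longrightarrow> (e1,a) \<in> E'" unfolding M1_def using EE' c1 E'tr by blast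
  have m2: "\<And>a. a \<in> M2 \<Longrightarrow> (e2,a) \<in> E'" unfolding M2_def using EE' c2 E'tr by blast
  have SE': "S \<subseteq> E'"
  proof
    fix p assume p: "p \<in> S"
    obtain a b where pab: "p = (a,b)" by (cases p) blast
    have h: "a \<in> V" "b \<in> V" "(a,b) \<in> E \<or> (a \<in> M1 \<and> b \<in> M1) \<or> (a \<in> M2 \<and> b \<in> M2)
     \<or> (M1 \<inter> M2 \<noteq> {} \<and> a \<in> M1 \<union> M2 \<and> b \<in> M1 \<union> M2)" using p unfolding pab S_def by auto
    have m12: "M1 \<inter> M2 \<noteq> {} \<Longrightarrow> (e1,e2) \<in> E'"
    proof -
      assume "M1 \<inter> M2 \<noteq> {}"
      then obtain c where "c \<in> M1" "c \<in> M2" by blast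
      then show ?thesis using m1 m2 E'tr E'sym by blast
    qed
    have mm: "\<And>c. M1 \<inter> M2 \<noteq> {} \<Longrightarrow> c \<in> M1 \<union> M2 \<Longrightarrow> (e1,c) \<in> E'"
      using m1 m2 m12 E'tr by blast
    show "p \<in> E'" unfolding pab using h(3)
    proof (elim disjE conjE)
      assume "(a,b) \<in> E" then show "(a,b) \<in> E'" using EE' by blast
    next
      assume "a \<in> M1" "b \<in> M1" then show "(a,b) \<in> E'" using m1 E'tr E'sym by blast
    next
      assume "a \<in> M2" "b \<in> M2" then show "(a,b) \<in> E'" using m2 E'tr E'sym by blast
    next
      assume "M1 \<inter> M2 \<noteq> {}" "a \<in> M1 \<union> M2" "b \<in> M1 \<union> M2"
      then show "(a,b) \<in> E'" using mm E'tr E'sym by blast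
    qed
  qed
  have E'eq: "E' = S" using E'S SE' by blast
  have circ': "circuits n x A' = V // S" unfolding circuits_def V_def E'_def[symmetric] E'eq ..
  have Sin: "\<And>a b. (a,b) \<in> S \<longleftrightarrow> a \<in> V \<and> b \<in> V \<and> ((a,b) \<in> E \<or> (a \<in> M1 \<and> b \<in> M1) \<or> (a \<in> M2 \<and> b \<in> M2)
     \<or> (M1 \<inter> M2 \<noteq> {} \<and> a \<in> M1 \<union> M2 \<and> b \<in> M1 \<union> M2))" unfolding S_def by simp
  have CS1: "\<And>a. a \<in> M1 \<union> M2 \<Longrightarrow> M1 \<inter> M2 \<noteq> {} \<Longrightarrow> S `` {a} = M1 \<union> M2"
  proof (intro equalityI subsetI)
    fix a b assume a: "a \<in> M1 \<union> M2" "M1 \<inter> M2 \<noteq> {}"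
    { assume "b \<in> S `` {a}" then have "(a,b) \<in> S" by simp
      then show "b \<in> M1 \<union> M2" unfolding Sin using a M1cl[of a b] M2cl[of a b] by blast }
    { assume b: "b \<in> M1 \<union> M2"
      have "(a,b) \<in> S" unfolding Sin using a b MV by blast
      then show "b \<in> S `` {a}" by simp }
  qed
  have CS2: "\<And>a. a \<in> M1 \<Longrightarrow> M1 \<inter> M2 = {} \<Longrightarrow> S `` {a} = M1"
  proof (intro equalityI subsetI)
    fix a b assume a: "a \<in> M1" "M1 \<inter> M2 = {}"
    { assume "b \<in> S `` {a}" then have "(a,b) \<in> S" by simp
      then show "b \<in> M1" unfolding Sin using a M1cl[of a b] by blast }
    { assume b: "b \<in> M1"
      have "(a,b) \<in> S" unfolding Sin using a b MV by blast
      then show "b \<in> S `` {a}" by simp }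
  qed
  have CS3: "\<And>a. a \<in> M2 \<Longrightarrow> M1 \<inter> M2 = {} \<Longrightarrow> S `` {a} = M2"
  proof (intro equalityI subsetI)
    fix a b assume a: "a \<in> M2" "M1 \<inter> M2 = {}"
    { assume "b \<in> S `` {a}" then have "(a,b) \<in> S" by simp
      then show "b \<in> M2" unfolding Sin using a M2cl[of a b] by blast }
    { assume b: "b \<in> M2"
      have "(a,b) \<in> S" unfolding Sin using a b MV by blast
      then show "b \<in> S `` {a}" by simp }
  qed
  have CS4: "\<And>a. a \<in> V \<Longrightarrow> a \<notin> M1 \<union> M2 \<Longrightarrow> S `` {a} = E `` {a}"
  proof (intro equalityI subsetI)
    fix a b assume a: "a \<in> V" "a \<notin> M1 \<union> M2"
    { assume "b \<in> S `` {a}" then have "(a,b) \<in> S" by simp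
      then show "b \<in> E `` {a}" unfolding Sin using a by blast }
    { assume b: "b \<in> E `` {a}"
      then have "(a,b) \<in> E" by simp
      then have "(a,b) \<in> S" unfolding Sin using a EV by blast
      then show "b \<in> S `` {a}" by simp }
  qed
  define rest where "rest = circuits n x A - {E `` {e1}, E `` {e2}, E `` {f1}, E `` {f2}}"
  have restI: "\<And>a. a \<in> V \<Longrightarrow> a \<notin> M1 \<union> M2 \<Longrightarrow> E `` {a} \<in> rest"
    unfolding rest_def M1_def M2_def using circ Kself by blast
  have restE: "\<And>L. L \<in> rest \<Longrightarrow> \<exists>a\<in>V. a \<notin> M1 \<union> M2 \<and> L = E `` {a}"
  proof -
    fix L assume L: "L \<in> rest"
    then obtain a where a: "a \<in> V" "L = E `` {a}" unfolding rest_def using circ by blast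
    have "a \<notin> M1 \<union> M2"
    proof
      assume "a \<in> M1 \<union> M2"
      then obtain c where c: "c \<in> {e1,e2,f1,f2}" "a \<in> E `` {c}" unfolding M1_def M2_def by blast
      then have "E `` {a} = E `` {c}" using Kmeet Kself[OF a(1)] by blast
      then show False using L a c unfolding rest_def by blast
    qed
    then show "\<exists>a\<in>V. a \<notin> M1 \<union> M2 \<and> L = E `` {a}" using a by blast
  qed
  have e1M: "e1 \<in> M1" "e2 \<in> M2" "f1 \<in> M2" "f2 \<in> M1" unfolding M1_def M2_def using Kself eV fV by auto
  have Csh: "M1 \<inter> M2 \<noteq> {} \<Longrightarrow> circuits n x A' = {M1 \<union> M2} \<union> rest"
  proof
    assume i: "M1 \<inter> M2 \<noteq> {}"
    show "circuits n x A' \<subseteq> {M1 \<union> M2} \<union> rest"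
    proof
      fix X assume "X \<in> circuits n x A'"
      then obtain a where a: "a \<in> V" "X = S `` {a}" unfolding circ' by (auto elim: quotientE)
      show "X \<in> {M1 \<union> M2} \<union> rest"
      proof (cases "a \<in> M1 \<union> M2")
        case True then show ?thesis using CS1[OF True i] a by simp
      next
        case False then show ?thesis using CS4[OF a(1) False] restI[OF a(1) False] a by simp
      qed
    qed
    show "{M1 \<union> M2} \<union> rest \<subseteq> circuits n x A'"
    proof
      fix X assume X: "X \<in> {M1 \<union> M2} \<union> rest"
      show "X \<in> circuits n x A'"
      proof (cases "X \<in> rest")
        case True
        then obtain a where a: "a \<in> V" "a \<notin> M1 \<union> M2" "X = E `` {a}" using restE by blast
        then show ?thesis unfolding circ' using quotientI[OF a(1), of S] CS4[OF a(1,2)] a(3) by simp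
      next
        case False
        then have "X = S `` {e1}" using X CS1[of e1] e1M i by auto
        then show ?thesis unfolding circ' using quotientI[OF eV(1), of S] quotientI[OF eV(2), of S] by auto
      qed
    qed
  qed
  have Cns: "M1 \<inter> M2 = {} \<Longrightarrow> circuits n x A' = {M1, M2} \<union> rest"
  proof
    assume i: "M1 \<inter> M2 = {}"
    show "circuits n x A' \<subseteq> {M1, M2} \<union> rest"
    proof
      fix X assume "X \<in> circuits n x A'"
      then obtain a where a: "a \<in> V" "X = S `` {a}" unfolding circ' by (auto elim: quotientE)
      show "X \<in> {M1, M2} \<union> rest"
      proof (cases "a \<in> M1 \<union> M2")
        case True
        then have "X = M1 \<or> X = M2" using CS2[OF _ i] CS3[OF _ i] a by blast
        then show ?thesis by blast
      next
        case False then show ?thesis using CS4[OF a(1) False] restI[OF a(1) False] a by simp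
      qed
    qed
    show "{M1, M2} \<union> rest \<subseteq> circuits n x A'"
    proof
      fix X assume X: "X \<in> {M1, M2} \<union> rest"
      show "X \<in> circuits n x A'"
      proof (cases "X \<in> rest")
        case True
        then obtain a where a: "a \<in> V" "a \<notin> M1 \<union> M2" "X = E `` {a}" using restE by blast
        then show ?thesis unfolding circ' using quotientI[OF a(1), of S] CS4[OF a(1,2)] a(3) by simp
      next
        case False
        then have "X = S `` {e1} \<or> X = S `` {e2}" using X CS2[of e1] CS3[of e2] e1M i by auto
        then show ?thesis unfolding circ' using quotientI[OF eV(1), of S] quotientI[OF eV(2), of S] by auto
      qed
    qed
  qed
  have M1E': "M1 \<inter> M2 = {} \<Longrightarrow> M1 = Eqr n x A' `` {e1}" using CS2 e1M E'eq E'_def by simp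
  have M2E': "M1 \<inter> M2 = {} \<Longrightarrow> M2 = Eqr n x A' `` {e2}" using CS3 e1M E'eq E'_def by simp
  have UE1: "M1 \<inter> M2 \<noteq> {} \<Longrightarrow> M1 \<union> M2 = Eqr n x A' `` {e1}" using CS1 e1M E'eq E'_def by simp
  have UE2: "M1 \<inter> M2 \<noteq> {} \<Longrightarrow> M1 \<union> M2 = Eqr n x A' `` {e2}" using CS1 e1M E'eq E'_def by simp
  have p12: "pair_in A' e1 e2" "pair_in A' e2 e1" using pA' by auto
  have disj: "\<And>a b. E `` {a} \<noteq> E `` {b} \<Longrightarrow> E `` {a} \<inter> E `` {b} = {}" using Kmeet by blast
  show ?thesis
    unfolding Let_def A'_def[symmetric] L1s L2s
    unfolding L1 L2 rest_def[symmetric]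
  proof (intro conjI impI)
    assume P: "E `` {e1} = E `` {e2} \<or> E `` {e1} = E `` {f1} \<or> E `` {e2} = E `` {f2}"
    have s1: "e1 \<in> E `` {e1}" "e2 \<in> E `` {e2}" using Kself eV by auto
    have "e1 \<in> M2 \<or> e2 \<in> M1" using P
    proof (elim disjE)
      assume h: "E `` {e1} = E `` {e2}"
      have "e1 \<in> E `` {e2}" using s1(1) h by simp
      then show ?thesis unfolding M2_def by blast
    next
      assume h: "E `` {e1} = E `` {f1}"
      have "e1 \<in> E `` {f1}" using s1(1) h by simp
      then show ?thesis unfolding M2_def by blast
    next
      assume h: "E `` {e2} = E `` {f2}"
      have "e2 \<in> E `` {f2}" using s1(2) h by simp
      then show ?thesis unfolding M1_def by blast
    qed
    then have i: "M1 \<inter> M2 \<noteq> {}" using e1M by blast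
    have U: "E `` {e1} \<union> E `` {f1} \<union> E `` {e2} \<union> E `` {f2} = M1 \<union> M2" unfolding M1_def M2_def by blast
    show "circuits n x A' = {E `` {e1} \<union> E `` {f1} \<union> E `` {e2} \<union> E `` {f2}} \<union> rest"
      using Csh[OF i] U by simp
    show "shorted n x A' (E `` {e1} \<union> E `` {f1} \<union> E `` {e2} \<union> E `` {f2})"
      unfolding shorted_def U using dual_cls[OF HA' p12(1)] UE1[OF i] UE2[OF i] by simp
  next
    assume P: "\<not> (E `` {e1} = E `` {e2} \<or> E `` {e1} = E `` {f1} \<or> E `` {e2} = E `` {f2})"
    have Kf: "E `` {f1} \<noteq> E `` {f2}"
    proof
      assume "E `` {f1} = E `` {f2}"
      then have "dual n x A (E `` {f1}) = dual n x A (E `` {f2})" by simp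
      then show False using d1 d2 P by simp
    qed
    have P1: "E `` {e1} \<noteq> E `` {e2}" "E `` {e1} \<noteq> E `` {f1}" "E `` {f2} \<noteq> E `` {e2}" using P by auto
    have "E `` {e1} \<inter> E `` {f1} = {}" "E `` {e1} \<inter> E `` {e2} = {}"
      "E `` {f2} \<inter> E `` {f1} = {}" "E `` {f2} \<inter> E `` {e2} = {}"
      using disj P1 Kf by metis+
    then have i: "M1 \<inter> M2 = {}" unfolding M1_def M2_def by blast
    have M1eq: "E `` {e1} \<union> E `` {f2} = M1" "E `` {f1} \<union> E `` {e2} = M2" unfolding M1_def M2_def by auto
    show "circuits n x A' = {E `` {e1} \<union> E `` {f2}, E `` {f1} \<union> E `` {e2}} \<union> rest"
      using Cns[OF i] M1eq by simp
    show "dual n x A' (E `` {e1} \<union> E `` {f2}) = E `` {f1} \<union> E `` {e2}"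
      unfolding M1eq using dual_cls[OF HA' p12(1)] M1E'[OF i] M2E'[OF i] by simp
    show "dual n x A' (E `` {f1} \<union> E `` {e2}) = E `` {e1} \<union> E `` {f2}"
      unfolding M1eq using dual_cls[OF HA' p12(2)] M1E'[OF i] M2E'[OF i] by simp
    show "\<not> shorted n x A' (E `` {e1} \<union> E `` {f2})"
      unfolding shorted_def M1eq using dual_cls[OF HA' p12(1)] M1E'[OF i] M2E'[OF i] i e1M by auto
    show "\<not> shorted n x A' (E `` {f1} \<union> E `` {e2})"
      unfolding shorted_def M1eq using dual_cls[OF HA' p12(2)] M1E'[OF i] M2E'[OF i] i e1M by auto
  next
    assume Q: "E `` {e2} = E `` {f1}"
    have "dual n x A (E `` {e2}) = dual n x A (E `` {f1})" using Q by simp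
    then have Q2: "E `` {f2} = E `` {e1}" using d1 L2s L2 by simp
    have M1e: "M1 = E `` {e1}" "M2 = E `` {f1}" unfolding M1_def M2_def using Q Q2 by auto
    have r: "rest = circuits n x A - {E `` {e1}, E `` {f1}}" unfolding rest_def using Q Q2 by auto
    have inC: "E `` {e1} \<in> circuits n x A" "E `` {f1} \<in> circuits n x A" using circ eV fV by auto
    show "circuits n x A' = circuits n x A"
    proof (cases "M1 \<inter> M2 = {}")
      case True then show ?thesis using Cns r M1e inC by auto
    next
      case False
      then have "E `` {e1} = E `` {f1}" using M1e disj[of e1 f1] by blast
      then show ?thesis using Csh False r M1e inC by auto
    qed
  qed
qed

end
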